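(* Let $(m_j)_{j=1}^{\infty}$ be a strictly increasing sequence of positive integers with $m_{j+1}\ge q\,m_j$ for all $j$, where $q\ge 3$. Let $A_j>0$, $B_j\in\mathbb{C}$ satisfy $A_j^2-|B_j|^2=1$ for all $j$. Suppose that the limit $$\lim_{N\to\infty}\prod_{j=1}^{N}\begin{bmatrix} A_j & B_j e^{2\pi i m_j t}\\ \overline{B_j}e^{-2\pi i m_j t} & A_j\end{bmatrix}$$ (factors multiplied in increasing order of $j$ from left to right) exists in $\mathrm{SU}(1,1)$ for every $t$ in a set of positive Lebesgue measure in $\mathbb{T}$. Then $\sum_{j=1}^{\infty}\log(A_j^2+|B_j|^2)<\infty$.
   Context: $\mathbb{T}=\mathbb{R}/\mathbb{Z}$. $\mathrm{SU}(1,1)=\{\begin{bmatrix} A & B\\ \overline{B} & \overline{A}\end{bmatrix}: A,B\in\mathbb{C},\ |A|^2-|B|^2=1\}$, with convergence understood with respect to the complete metric $\rho(G_1,G_2)=\log(1+\|G_1^{-1}G_2-I_2\|_{op})$ (equivalently entrywise). The conclusion is equivalent to $\sum_j |B_j|^2<\infty$. *)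

theory Defs
  imports "HOL-Analysis.Analysis"
begin

definition mat2 :: "complex \<Rightarrow> complex \<Rightarrow> complex \<Rightarrow> complex \<Rightarrow> complex^2^2" where
  "mat2 a b c d = (\<chi> i j. if i = 1 then (if j = 1 then a else b) else (if j = 1 then c else d))"

definition SU11 :: "(complex^2^2) set" where
  "SU11 = {M. \<exists>A B. M = mat2 A B (cnj B) (cnj A) \<and> (cmod A)\<^sup>2 - (cmod B)\<^sup>2 = 1}"

primrec prodL :: "(nat \<Rightarrow> complex^2^2) \<Rightarrow> nat \<Rightarrow> complex^2^2" where
  "prodL F 0 = mat 1"
| "prodL F (Suc N) = prodL F N ** F N"

definition factor :: "(nat \<Rightarrow> nat) \<Rightarrow> (nat \<Rightarrow> real) \<Rightarrow> (nat \<Rightarrow> complex) \<Rightarrow> real \<Rightarrow> nat \<Rightarrow> complex^2^2" where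
  "factor m A B t j = mat2 (complex_of_real (A j))
      (B j * cis (2 * pi * real (m j) * t))
      (cnj (B j) * cis (- 2 * pi * real (m j) * t))
      (complex_of_real (A j))"

end

theory Submission
  imports Defs "HOL-Complex_Analysis.Complex_Analysis"
begin

definition ee :: "real \<Rightarrow> complex" where "ee t = cis (2*pi*t)"

definition pk :: "complex \<Rightarrow> real \<Rightarrow> real" where
  "pk w t = (1 - (cmod w)^2) / (cmod (ee t - w))^2"

lemma ee_circlepath: "circlepath 0 1 t = ee t"
  by (simp add: circlepath ee_def cis_conv_exp mult.commute mult.left_commute)

lemma norm_ee[simp]: "cmod (ee t) = 1" by (simp add: ee_def)

lemma cnj_ee: "cnj (ee t) = inverse (ee t)"
  by (simp add: ee_def cis_cnj cis_inverse)

lemma ee_nz[simp]: "ee t \<noteq> 0" by (simp add: ee_def)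

lemma cauchy01:
  assumes "continuous_on (cball 0 1) f" "f holomorphic_on ball 0 1" "cmod w < 1"
  shows "((\<lambda>t. f (ee t) / (ee t - w) * ee t) has_integral f w) {0..1}"
proof -
  have "((\<lambda>u. f u/(u-w)) has_contour_integral (2 * of_real pi * \<i> * f w)) (circlepath 0 1)"
    using Cauchy_integral_circlepath[OF assms(1,2)] assms(3) by simp
  then have "((\<lambda>t. f (ee t) / (ee t - w) * (2 * pi * \<i> * ee t)) has_integral (2 * of_real pi * \<i> * f w)) {0..1}"
    unfolding has_contour_integral_def
  proof (rule has_integral_eq[rotated])
    fix x :: real assume x: "x \<in> {0..1}"
    have "vector_derivative (circlepath 0 1) (at x within {0..1}) = 2*pi*\<i>*ee x"
      using x by (simp add: vector_derivative_circlepath01 ee_def cis_conv_exp mult.commute mult.left_commute)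
    then show "f (circlepath 0 1 x) / (circlepath 0 1 x - w) * vector_derivative (circlepath 0 1) (at x within {0..1})
      = f (ee x) / (ee x - w) * (2 * pi * \<i> * ee x)" by (simp add: ee_circlepath)
  qed
  from has_integral_mult_right[OF this, of "1/(2*pi*\<i>)"]
  show ?thesis by (simp add: field_simps)
qed

lemma poisson_kernel_eq:
  assumes "cmod w < 1"
  shows "ee t / (ee t - w) + cnj w * ee t / (1 - cnj w * ee t) = of_real (pk w t)"
proof -
  let ?e = "ee t"
  have e1: "?e * cnj ?e = 1" using norm_ee[of t] by (simp add: complex_norm_square[symmetric])
  have n1: "?e - w \<noteq> 0" using assms norm_ee[of t] by auto
  have n2: "1 - cnj w * ?e \<noteq> 0"
  proof
    assume "1 - cnj w * ?e = 0"
    then have "cmod (cnj w * ?e) = 1" by (metis eq_iff_diff_eq_0 norm_one)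
    then show False using assms by (simp add: norm_mult)
  qed
  have f: "1 - cnj w * ?e = ?e * cnj (?e - w)" using e1 by (simp add: algebra_simps)
  have "?e / (?e - w) + cnj w * ?e / (1 - cnj w * ?e) = ?e * (1 - w * cnj w) / ((?e - w) * (1 - cnj w * ?e))"
    using n1 n2 by (simp add: field_simps)
  also have "\<dots> = ?e * (1 - w * cnj w) / ((?e - w) * (?e * cnj (?e - w)))"
    by (simp only: f)
  also have "\<dots> = (1 - w * cnj w) / ((?e - w) * cnj (?e - w))"
    using ee_nz[of t] by (metis mult.left_commute mult_divide_mult_cancel_left)
  also have "\<dots> = of_real (pk w t)"
    by (simp only: pk_def of_real_divide of_real_diff of_real_1 complex_norm_square)
  finally show ?thesis .
qed

lemma poisson:
  assumes "continuous_on (cball 0 1) f" "f holomorphic_on ball 0 1" "cmod w < 1"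
  shows "((\<lambda>t. of_real (pk w t) * f (ee t)) has_integral f w) {0..1}"
proof -
  define h where "h u = f u * (cnj w * u / (1 - cnj w * u))" for u
  have nz: "1 - cnj w * u \<noteq> 0" if "u \<in> cball 0 1" for u
  proof
    assume "1 - cnj w * u = 0"
    then have "cmod (cnj w * u) = 1" by (metis eq_iff_diff_eq_0 norm_one)
    moreover have "cmod (cnj w * u) < 1" using assms(3) that
      by (simp add: norm_mult) (metis abs_norm_cancel dual_order.strict_trans2 mult_left_le mult_less_cancel_right1 norm_ge_zero mult.commute)
    ultimately show False by simp
  qed
  have hc: "continuous_on (cball 0 1) h" unfolding h_def
    by (intro continuous_intros assms(1)) (use nz in auto)
  have hh: "h holomorphic_on ball 0 1" unfolding h_def
    by (intro holomorphic_intros assms(2)) (use nz in auto)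
  note I1 = cauchy01[OF assms]
  have n0: "cmod (0::complex) < 1" by simp
  note I2 = cauchy01[OF hc hh n0]
  have "((\<lambda>t. f (ee t) / (ee t - w) * ee t + h (ee t) / (ee t - 0) * ee t) has_integral (f w + h 0)) {0..1}"
    by (rule has_integral_add[OF I1 I2])
  moreover have "h 0 = 0" by (simp add: h_def)
  ultimately have "((\<lambda>t. f (ee t) / (ee t - w) * ee t + h (ee t) / (ee t - 0) * ee t) has_integral f w) {0..1}" by simp
  then show ?thesis
  proof (rule has_integral_eq[rotated])
    fix t
    have "f (ee t) / (ee t - w) * ee t + h (ee t) / (ee t - 0) * ee t
        = f (ee t) * (ee t / (ee t - w) + cnj w * ee t / (1 - cnj w * ee t))"
      using ee_nz[of t] by (simp add: h_def distrib_left)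
    also have "\<dots> = of_real (pk w t) * f (ee t)" using poisson_kernel_eq[OF assms(3)] by simp
    finally show "f (ee t) / (ee t - w) * ee t + h (ee t) / (ee t - 0) * ee t = of_real (pk w t) * f (ee t)" .
  qed
qed


lemma mat2_mult: "mat2 a b c d ** mat2 a' b' c' d' =
   mat2 (a*a'+b*c') (a*b'+b*d') (c*a'+d*c') (c*b'+d*d')"
  unfolding mat2_def matrix_matrix_mult_def
  by (simp add: vec_eq_iff sum_2 forall_2)

lemma mat2_one: "mat 1 = mat2 1 0 0 1"
  unfolding mat2_def by (simp add: vec_eq_iff forall_2 mat_def)

lemma mat2_nth: "mat2 a b c d $ 1 $ 1 = a" "mat2 a b c d $ 1 $ 2 = b"
   "mat2 a b c d $ 2 $ 1 = c" "mat2 a b c d $ 2 $ 2 = d"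
  by (simp_all add: mat2_def)

lemma prodL_add: "prodL F (M + n) = prodL F M ** prodL (\<lambda>j. F (M + j)) n"
  by (induction n) (simp_all add: matrix_mul_assoc)

lemma norm_identity:
  fixes a :: real and b X z :: complex
  shows "(cmod (of_real a * X + b * z))^2 - (cmod (cnj b * X + of_real a * z))^2
     = (a^2 - (cmod b)^2) * ((cmod X)^2 - (cmod z)^2)"
  unfolding cmod_power2 by (simp add: power2_eq_square algebra_simps)


locale lacu =
  fixes m :: "nat \<Rightarrow> nat" and q :: real and A :: "nat \<Rightarrow> real" and B :: "nat \<Rightarrow> complex"
  assumes q: "q \<ge> 3" and mpos: "\<And>j. m j > 0" and lac: "\<And>j. real (m (Suc j)) \<ge> q * real (m j)"
    and Apos: "\<And>j. A j > 0" and AB: "\<And>j. (A j)\<^sup>2 - (cmod (B j))\<^sup>2 = 1"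
begin

definition Dg :: "nat \<Rightarrow> nat \<Rightarrow> nat" where "Dg M n = (\<Sum>i<n. m (M+i))"

primrec st :: "nat \<Rightarrow> nat \<Rightarrow> complex \<Rightarrow> complex \<times> complex \<times> complex \<times> complex" where
  "st M 0 w = (1,1,0,0)"
| "st M (Suc n) w = (case st M n w of (X,U,Y,V) \<Rightarrow>
   (of_real (A (M+n)) * X + B (M+n) * w^(m(M+n) - Dg M n) * V,
    of_real (A (M+n)) * w^(m(M+n)) * U + cnj (B (M+n)) * w^(Dg M n) * Y,
    B (M+n) * w^(m(M+n) - Dg M n) * U + of_real (A (M+n)) * Y,
    cnj (B (M+n)) * w^(Dg M n) * X + of_real (A (M+n)) * w^(m(M+n)) * V))"

definition "XX M n w = fst (st M n w)"
definition "UU M n w = fst (snd (st M n w))"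
definition "YY M n w = fst (snd (snd (st M n w)))"
definition "VV M n w = snd (snd (snd (st M n w)))"

lemma st0[simp]: "XX M 0 w = 1" "UU M 0 w = 1" "YY M 0 w = 0" "VV M 0 w = 0"
  by (simp_all add: XX_def UU_def YY_def VV_def)

lemma stS:
  "XX M (Suc n) w = of_real (A (M+n)) * XX M n w + B (M+n) * w^(m(M+n) - Dg M n) * VV M n w"
  "UU M (Suc n) w = of_real (A (M+n)) * w^(m(M+n)) * UU M n w + cnj (B (M+n)) * w^(Dg M n) * YY M n w"
  "YY M (Suc n) w = B (M+n) * w^(m(M+n) - Dg M n) * UU M n w + of_real (A (M+n)) * YY M n w"
  "VV M (Suc n) w = cnj (B (M+n)) * w^(Dg M n) * XX M n w + of_real (A (M+n)) * w^(m(M+n)) * VV M n w"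
  by (simp_all add: XX_def UU_def YY_def VV_def split: prod.splits)

lemma DgS: "Dg M (Suc n) = Dg M n + m (M+n)"
  by (simp add: Dg_def)

lemma m_ge3: "real (m (Suc j)) \<ge> 3 * real (m j)"
proof -
  have "3 * real (m j) \<le> q * real (m j)" by (rule mult_right_mono) (use q in auto)
  then show ?thesis using lac[of j] by linarith
qed

lemma Dlt: "2 * Dg M n < m (M+n)"
proof (induction n)
  case 0 then show ?case using mpos by (simp add: Dg_def)
next
  case (Suc n)
  have "real (m (Suc (M+n))) \<ge> 3 * real (m (M+n))" by (rule m_ge3)
  then have "m (M + Suc n) \<ge> 3 * m (M+n)" by simp
  with Suc show ?case by (simp add: DgS)
qed

lemma Dle: "Dg M n \<le> m (M+n)" using Dlt[of M n] by simp

lemma circle: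
  assumes w: "cmod w = 1"
  shows "UU M n w = w^(Dg M n) * cnj (XX M n w) \<and> VV M n w = w^(Dg M n) * cnj (YY M n w)"
proof (induction n)
  case 0 then show ?case by (simp add: Dg_def)
next
  case (Suc n)
  define d where "d = Dg M n"
  define k where "k = m (M+n) - d"
  have mm: "m (M+n) = d + k" using Dle[of M n] by (simp add: d_def k_def)
  have w0: "w \<noteq> 0" using w by auto
  have "w * cnj w = 1" using complex_norm_square[of w] w by simp
  then have cw: "cnj w = inverse w" using inverse_unique by metis
  have U: "UU M n w = w^d * cnj (XX M n w)" and V: "VV M n w = w^d * cnj (YY M n w)"
    using Suc by (simp_all add: d_def)
  show ?case
    unfolding stS DgS d_def[symmetric] k_def[symmetric] mm U V
    using w0 by (simp add: cw power_add field_simps power_inverse)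
qed

lemma ee_pow: "ee t ^ n = cis (2 * pi * real n * t)"
  unfolding ee_def Complex.DeMoivre by (simp add: algebra_simps)

lemma cnj_ee_pow: "cnj (ee t) ^ n = cis (- 2 * pi * real n * t)"
  unfolding ee_def cis_cnj Complex.DeMoivre by (simp add: algebra_simps)

lemma prod_rep:
  "prodL (\<lambda>j. factor m A B t (M+j)) n =
     mat2 (cnj (XX M n (ee t))) (YY M n (ee t)) (cnj (YY M n (ee t))) (XX M n (ee t))"
proof (induction n)
  case 0 then show ?case by (simp add: mat2_one)
next
  case (Suc n)
  define w where "w = ee t"
  define d where "d = Dg M n"
  define k where "k = m (M+n) - d"
  have mm: "m (M+n) = d + k" using Dle[of M n] by (simp add: d_def k_def)
  have w1: "cmod w = 1" by (simp add: w_def)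
  have w0: "w \<noteq> 0" using w1 by auto
  have "w * cnj w = 1" using complex_norm_square[of w] w1 by simp
  then have cw: "cnj w = inverse w" using inverse_unique by metis
  have U: "UU M n w = w^d * cnj (XX M n w)" and V: "VV M n w = w^d * cnj (YY M n w)"
    using circle[OF w1] by (simp_all add: d_def)
  have c1: "cis (2 * pi * real (m (M+n)) * t) = w^(d+k)" using ee_pow[of t "m (M+n)"] by (simp add: w_def mm)
  have c2: "cis (- 2 * pi * real (m (M+n)) * t) = inverse w^(d+k)" using cnj_ee_pow[of t "m (M+n)"] by (simp add: w_def mm cnj_ee)
  have "prodL (\<lambda>j. factor m A B t (M+j)) (Suc n) =
     mat2 (cnj (XX M n w)) (YY M n w) (cnj (YY M n w)) (XX M n w) **
     mat2 (of_real (A (M+n))) (B (M+n) * w^(d+k)) (cnj (B (M+n)) * inverse w^(d+k)) (of_real (A (M+n)))"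
    unfolding prodL.simps Suc.IH w_def[symmetric] using c1 c2 by (simp add: factor_def)
  also have "\<dots> = mat2 (cnj (XX M (Suc n) w)) (YY M (Suc n) w) (cnj (YY M (Suc n) w)) (XX M (Suc n) w)"
    unfolding mat2_mult stS d_def[symmetric] k_def[symmetric] mm U V
    using w0 by (simp add: cw power_add field_simps power_inverse)
  finally show ?case by (simp add: w_def)
qed

lemma Blt: "cmod (B j) < A j"
proof -
  have "(cmod (B j))^2 < (A j)^2" using AB[of j] by linarith
  then show ?thesis using Apos[of j] by (meson abs_le_square_iff abs_of_pos less_le_not_le linorder_not_le norm_ge_zero power2_less_imp_less)
qed

lemma det_circle:
  assumes w: "cmod w = 1"
  shows "(cmod (XX M n w))^2 - (cmod (VV M n w))^2 = 1"
proof (induction n)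
  case 0 then show ?case by simp
next
  case (Suc n)
  define d where "d = Dg M n"
  define k where "k = m (M+n) - d"
  have mm: "m (M+n) = d + k" using Dle[of M n] by (simp add: d_def k_def)
  have "VV M (Suc n) w = w^d * (cnj (B (M+n)) * XX M n w + of_real (A (M+n)) * (w^k * VV M n w))"
    unfolding stS d_def[symmetric] k_def[symmetric] mm by (simp add: algebra_simps power_add)
  then have "cmod (VV M (Suc n) w) = cmod (cnj (B (M+n)) * XX M n w + of_real (A (M+n)) * (w^k * VV M n w))"
    using w by (simp add: norm_mult norm_power)
  moreover have "XX M (Suc n) w = of_real (A (M+n)) * XX M n w + B (M+n) * (w^k * VV M n w)"
    unfolding stS d_def[symmetric] k_def[symmetric] by (simp add: algebra_simps)
  ultimately have "(cmod (XX M (Suc n) w))^2 - (cmod (VV M (Suc n) w))^2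
     = ((A (M+n))^2 - (cmod (B (M+n)))^2) * ((cmod (XX M n w))^2 - (cmod (w^k * VV M n w))^2)"
    using norm_identity by simp
  also have "\<dots> = 1" using AB Suc w by (simp add: norm_mult norm_power)
  finally show ?case .
qed

lemma norm_VY: "cmod w = 1 \<Longrightarrow> cmod (VV M n w) = cmod (YY M n w)"
  using circle[of w M n] by (simp add: norm_mult norm_power)

lemma disk:
  assumes w: "cmod w \<le> 1"
  shows "XX M n w \<noteq> 0 \<and> cmod (VV M n w) \<le> cmod (XX M n w)"
proof (induction n)
  case 0 then show ?case by simp
next
  case (Suc n)
  define d where "d = Dg M n"
  define k where "k = m (M+n) - d"
  define a where "a = A (M+n)"
  define b where "b = B (M+n)"
  have mm: "m (M+n) = d + k" using Dle[of M n] by (simp add: d_def k_def)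
  define X where "X = XX M n w"
  define z where "z = w^k * VV M n w / X"
  have X0: "X \<noteq> 0" using Suc by (simp add: X_def)
  have "cmod (w^k) \<le> 1" using w by (simp add: norm_power power_le_one)
  then have "cmod (w^k) * cmod (VV M n w) \<le> 1 * cmod X"
    using Suc by (intro mult_mono) (auto simp: X_def)
  then have z1: "cmod z \<le> 1" using X0
    by (simp add: z_def norm_mult norm_divide divide_le_eq_1)
  have ba: "cmod b < a" using Blt by (simp add: a_def b_def)
  have XS: "XX M (Suc n) w = X * (of_real a + b * z)"
    unfolding stS d_def[symmetric] k_def[symmetric] using X0
    by (simp add: z_def X_def a_def b_def field_simps)
  have VS: "VV M (Suc n) w = w^d * X * (cnj b + of_real a * z)"
    unfolding stS d_def[symmetric] k_def[symmetric] mm using X0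
    by (simp add: z_def X_def a_def b_def field_simps power_add)
  have "cmod (b * z) \<le> cmod b" using z1 by (simp add: norm_mult mult_left_le)
  then have nz: "of_real a + b * z \<noteq> 0" using ba
    by (metis add.commute add_eq_0_iff2 norm_minus_cancel norm_of_real abs_of_pos le_less_trans less_irrefl norm_ge_zero)
  have "(cmod (of_real a * 1 + b * z))^2 - (cmod (cnj b * 1 + of_real a * z))^2
     = (a^2 - (cmod b)^2) * ((cmod (1::complex))^2 - (cmod z)^2)" by (rule norm_identity)
  moreover have "a^2 - (cmod b)^2 = 1" using AB[of "M+n"] by (simp add: a_def b_def)
  moreover have "(cmod z)^2 \<le> 1" using z1 by (simp add: power_le_one)
  ultimately have "(cmod (of_real a + b * z))^2 - (cmod (cnj b + of_real a * z))^2 = 1 - (cmod z)^2" by simp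
  then have "(cmod (cnj b + of_real a * z))^2 \<le> (cmod (of_real a + b * z))^2"
    using \<open>(cmod z)^2 \<le> 1\<close> by linarith
  then have le: "cmod (cnj b + of_real a * z) \<le> cmod (of_real a + b * z)"
    by (rule power2_le_imp_le) simp
  have "cmod (w^d) \<le> 1" using w by (simp add: norm_power power_le_one)
  then have "cmod (w^d) * (cmod X * cmod (cnj b + of_real a * z)) \<le> 1 * (cmod X * cmod (of_real a + b * z))"
    using le by (intro mult_mono mult_left_mono) auto
  then have "cmod (VV M (Suc n) w) \<le> cmod (XX M (Suc n) w)"
    unfolding VS XS by (simp add: norm_mult mult.assoc)
  then show ?case using XS X0 nz by simp
qed

lemma hol: "(\<lambda>w. XX M n w) holomorphic_on S \<and> (\<lambda>w. UU M n w) holomorphic_on S \<and>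
            (\<lambda>w. YY M n w) holomorphic_on S \<and> (\<lambda>w. VV M n w) holomorphic_on S"
proof (induction n)
  case 0 then show ?case by simp
next
  case (Suc n)
  then show ?case unfolding stS by (auto intro!: holomorphic_intros)
qed

lemma contXX: "continuous_on S (\<lambda>w. XX M n w)" "continuous_on S (\<lambda>w. UU M n w)"
  "continuous_on S (\<lambda>w. YY M n w)" "continuous_on S (\<lambda>w. VV M n w)"
  using hol[of M n S] by (auto intro: holomorphic_on_imp_continuous_on)

definition zz :: "nat \<Rightarrow> nat \<Rightarrow> complex \<Rightarrow> complex" where
  "zz M n w = w^(m(M+n) - Dg M n) * VV M n w / XX M n w"

lemma zz_bound:
  assumes "cmod w \<le> 1"
  shows "cmod (zz M n w) \<le> cmod w ^ (m(M+n) - Dg M n)"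
proof -
  have X0: "XX M n w \<noteq> 0" and le: "cmod (VV M n w) \<le> cmod (XX M n w)" using disk[OF assms] by auto
  have "cmod (VV M n w) / cmod (XX M n w) \<le> 1" using X0 le by simp
  then have "cmod w ^ (m(M+n) - Dg M n) * (cmod (VV M n w) / cmod (XX M n w)) \<le> cmod w ^ (m(M+n) - Dg M n) * 1"
    by (intro mult_left_mono) auto
  then show ?thesis by (simp add: zz_def norm_mult norm_divide norm_power)
qed

lemma XS:
  assumes "cmod w \<le> 1"
  shows "XX M (Suc n) w = XX M n w * (of_real (A (M+n)) + B (M+n) * zz M n w)"
proof -
  have X0: "XX M n w \<noteq> 0" using disk[OF assms] by auto
  then show ?thesis unfolding stS zz_def by (simp add: field_simps)
qed

lemma zz_small:
  assumes "cmod w \<le> 1"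
  shows "cmod (B (M+n) / of_real (A (M+n)) * zz M n w) < 1"
proof -
  have "cmod (zz M n w) \<le> 1" using zz_bound[OF assms, of M n] assms
    by (meson norm_ge_zero order_trans power_le_one)
  moreover have "cmod (B (M+n)) / A (M+n) < 1" using Blt Apos by simp
  moreover have "cmod (B (M+n)) / A (M+n) \<ge> 0" using Apos[of "M+n"] by simp
  ultimately have "cmod (B (M+n)) / A (M+n) * cmod (zz M n w) \<le> cmod (B (M+n)) / A (M+n) * 1"
    by (intro mult_left_mono) auto
  then have "cmod (B (M+n)) / A (M+n) * cmod (zz M n w) < 1"
    using \<open>cmod (B (M+n)) / A (M+n) < 1\<close> by linarith
  then show ?thesis using Apos[of "M+n"] by (simp add: norm_mult norm_divide)
qed

lemma not_nonpos: "cmod u < 1 \<Longrightarrow> 1 + u \<notin> \<real>\<^sub>\<le>\<^sub>0"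
  using abs_Re_le_cmod[of u] by (auto simp: complex_nonpos_Reals_iff)

lemma lower:
  assumes w: "cmod w \<le> 1"
  shows "cmod (XX M n w) \<ge> (\<Prod>i<n. A (M+i)) * (1 - (\<Sum>i<n. cmod w ^ (m(M+i) - Dg M i)))"
proof (induction n)
  case 0 then show ?case by simp
next
  case (Suc n)
  define a where "a = A (M+n)"
  define x where "x = cmod w ^ (m(M+n) - Dg M n)"
  define P where "P = (\<Prod>i<n. A (M+i))"
  define S where "S = (\<Sum>i<n. cmod w ^ (m(M+i) - Dg M i))"
  have a0: "a > 0" using Apos by (simp add: a_def)
  have P0: "P > 0" unfolding P_def using Apos by (intro prod_pos) auto
  have x0: "0 \<le> x" "x \<le> 1" using w by (auto simp: x_def power_le_one)
  have S0: "0 \<le> S" unfolding S_def by (intro sum_nonneg) auto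
  have z: "cmod (zz M n w) \<le> x" using zz_bound[OF w] by (simp add: x_def)
  have "cmod (B (M+n) * zz M n w) \<le> a * x"
    using Blt[of "M+n"] z by (simp add: norm_mult a_def) (metis mult_mono' less_imp_le norm_ge_zero)
  then have "cmod (of_real a + B (M+n) * zz M n w) \<ge> a - a * x"
    using norm_triangle_ineq2[of "of_real a" "- B (M+n) * zz M n w"] a0 by simp
  then have fac: "cmod (of_real a + B (M+n) * zz M n w) \<ge> a * (1 - x)" by (simp add: algebra_simps)
  have IH: "cmod (XX M n w) \<ge> P * (1 - S)" using Suc by (simp add: P_def S_def)
  have goal_eq: "(\<Prod>i<Suc n. A (M+i)) * (1 - (\<Sum>i<Suc n. cmod w ^ (m(M+i) - Dg M i))) = P * a * (1 - S - x)"
    by (simp add: P_def S_def a_def x_def algebra_simps)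
  show ?case
  proof (cases "1 - S \<ge> 0")
    case False
    then have "P * a * (1 - S - x) \<le> 0" using P0 a0 x0
      by (intro mult_nonneg_nonpos) auto
    then show ?thesis unfolding goal_eq by (meson norm_ge_zero order_trans)
  next
    case True
    have "P * a * (1 - S - x) \<le> P * a * ((1 - S) * (1 - x))"
      using P0 a0 x0 S0 by (intro mult_left_mono) (auto simp: algebra_simps)
    also have "\<dots> = (P * (1 - S)) * (a * (1 - x))" by simp
    also have "\<dots> \<le> cmod (XX M n w) * cmod (of_real a + B (M+n) * zz M n w)"
      using IH fac True P0 a0 x0 by (intro mult_mono) auto
    also have "\<dots> = cmod (XX M (Suc n) w)" using XS[OF w] by (simp add: norm_mult a_def)
    finally show ?thesis unfolding goal_eq .
  qed
qed

definition FF :: "nat \<Rightarrow> nat \<Rightarrow> complex \<Rightarrow> complex" where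
  "FF M n w = (\<Sum>i<n. Ln (1 + B (M+i) / of_real (A (M+i)) * zz M i w))"

lemma FF_rep:
  assumes w: "cmod w \<le> 1"
  shows "XX M n w = of_real (\<Prod>i<n. A (M+i)) * exp (FF M n w)"
proof (induction n)
  case 0 then show ?case by (simp add: FF_def)
next
  case (Suc n)
  define u where "u = 1 + B (M+n) / of_real (A (M+n)) * zz M n w"
  have u0: "u \<noteq> 0" using not_nonpos[OF zz_small[OF w, of M n]] by (auto simp: u_def)
  have a0: "A (M+n) \<noteq> 0" using Apos[of "M+n"] by simp
  have "XX M (Suc n) w = XX M n w * (of_real (A (M+n)) * u)"
    unfolding XS[OF w] u_def using a0 by (simp add: field_simps)
  also have "\<dots> = of_real (\<Prod>i<Suc n. A (M+i)) * (exp (FF M n w) * exp (Ln u))"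
    using Suc u0 by simp
  also have "\<dots> = of_real (\<Prod>i<Suc n. A (M+i)) * exp (FF M (Suc n) w)"
    by (simp add: FF_def u_def exp_add)
  finally show ?case .
qed

lemma ln_XX:
  assumes w: "cmod w \<le> 1"
  shows "ln (cmod (XX M n w)) = (\<Sum>i<n. ln (A (M+i))) + Re (FF M n w)"
proof -
  have P0: "(\<Prod>i<n. A (M+i)) > 0" using Apos by (intro prod_pos) auto
  have "cmod (XX M n w) = (\<Prod>i<n. A (M+i)) * exp (Re (FF M n w))"
    unfolding FF_rep[OF w, of M n] using P0 by (simp only: norm_mult norm_of_real norm_exp_eq_Re abs_of_pos)
  then have "ln (cmod (XX M n w)) = ln (\<Prod>i<n. A (M+i)) + ln (exp (Re (FF M n w)))"
    using P0 Apos by (simp add: ln_mult less_imp_neq[symmetric])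
  then have "ln (cmod (XX M n w)) = ln (\<Prod>i<n. A (M+i)) + Re (FF M n w)" by simp
  also have "ln (\<Prod>i<n. A (M+i)) = (\<Sum>i<n. ln (A (M+i)))"
    using Apos by (subst ln_prod) (auto simp: less_imp_neq[symmetric])
  finally show ?thesis .
qed

lemma zz_cont: "continuous_on (cball 0 1) (zz M n)"
proof -
  have "continuous_on (cball 0 1) (\<lambda>w. w^(m(M+n) - Dg M n) * VV M n w / XX M n w)"
    using disk by (intro continuous_intros contXX) auto
  then show ?thesis by (simp add: zz_def[abs_def])
qed

lemma zz_hol: "zz M n holomorphic_on ball 0 1"
proof -
  have "(\<lambda>w. w^(m(M+n) - Dg M n) * VV M n w / XX M n w) holomorphic_on ball 0 1"
    using disk hol[of M n "ball 0 1"] by (intro holomorphic_intros) auto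
  then show ?thesis by (simp add: zz_def[abs_def])
qed

lemma FF_cont: "continuous_on (cball 0 1) (FF M n)"
proof -
  have "continuous_on (cball 0 1) (\<lambda>w. \<Sum>i<n. Ln (1 + B (M+i) / of_real (A (M+i)) * zz M i w))"
    using zz_small not_nonpos zz_cont
    by (intro continuous_intros continuous_on_Ln') (auto simp: continuous_on_mult_left)
  then show ?thesis by (simp add: FF_def[abs_def])
qed

lemma FF_hol: "FF M n holomorphic_on ball 0 1"
proof -
  have "(\<lambda>w. \<Sum>i<n. Ln (1 + B (M+i) / of_real (A (M+i)) * zz M i w)) holomorphic_on ball 0 1"
    using zz_small not_nonpos zz_hol
    by (intro holomorphic_intros holomorphic_on_Ln') auto
  then show ?thesis by (simp add: FF_def[abs_def])
qed

end

lemma ee_cont: "continuous_on S ee"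
  unfolding ee_def by (intro continuous_intros)

lemma pk0: "pk 0 t = 1" by (simp add: pk_def)

lemma mean_value:
  assumes "continuous_on (cball 0 1) f" "f holomorphic_on ball 0 1"
  shows "((\<lambda>t. f (ee t)) has_integral f 0) {0..1}"
  using poisson[OF assms, of 0] by (simp add: pk0)

lemma sq_expand:
  fixes a :: real and X Z :: complex
  shows "(cmod (of_real a * X + Z))^2 = a^2 * (cmod X)^2 + (cmod Z)^2 + 2 * a * Re (cnj X * Z)"
  unfolding cmod_power2 by (simp add: power2_eq_square algebra_simps)

context lacu begin

definition I2 :: "nat \<Rightarrow> nat \<Rightarrow> real" where
  "I2 M n = integral {0..1} (\<lambda>t. (cmod (XX M n (ee t)))^2)"

lemma cont_circ: "continuous_on S (\<lambda>t. XX M n (ee t))" "continuous_on S (\<lambda>t. UU M n (ee t))"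
   "continuous_on S (\<lambda>t. VV M n (ee t))"
  by (auto intro!: continuous_on_compose2[OF contXX(1) ee_cont] continuous_on_compose2[OF contXX(2) ee_cont]
        continuous_on_compose2[OF contXX(4) ee_cont])

lemma I2_has: "((\<lambda>t. (cmod (XX M n (ee t)))^2) has_integral I2 M n) {0..1}"
proof -
  have "continuous_on {0..1} (\<lambda>t. (cmod (XX M n (ee t)))^2)"
    by (intro continuous_intros cont_circ)
  then show ?thesis unfolding I2_def
    using integrable_continuous_interval integrable_integral by blast
qed

lemma I2_step: "I2 M (Suc n) = ((A (M+n))^2 + (cmod (B (M+n)))^2) * I2 M n - (cmod (B (M+n)))^2"
proof -
  define d where "d = Dg M n"
  define k where "k = m (M+n) - d"
  define a where "a = A (M+n)"
  define b where "b = B (M+n)"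
  have kd: "k = d + (k - d)" and kd1: "k - d \<ge> 1" using Dlt[of M n] by (auto simp: d_def k_def)
  define H where "H w = UU M n w * VV M n w * w^(k-d)" for w
  have Hc: "continuous_on (cball 0 1) H" unfolding H_def by (intro continuous_intros contXX)
  have Hh: "H holomorphic_on ball 0 1" unfolding H_def using hol[of M n "ball 0 1"] by (intro holomorphic_intros) auto
  have H0: "H 0 = 0" using kd1 by (simp add: H_def zero_power)
  have hH: "((\<lambda>t. H (ee t)) has_integral 0) {0..1}" using mean_value[OF Hc Hh] H0 by simp
  have hR: "((\<lambda>t. 2 * a * Re (b * H (ee t))) has_integral 0) {0..1}"
  proof -
    have bl: "bounded_linear (\<lambda>z::complex. 2 * a * Re (b * z))" using bounded_linear_compose[OF bounded_linear_Re bounded_linear_mult_right[of b]] by (intro bounded_linear_intros) (simp add: o_def)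
    show ?thesis using has_integral_linear[OF hH bl] by (simp add: o_def)
  qed
  have pt: "(cmod (XX M (Suc n) (ee t)))^2 = (a^2 + (cmod b)^2) * (cmod (XX M n (ee t)))^2 - (cmod b)^2
      + 2 * a * Re (b * H (ee t))" for t
  proof -
    define w where "w = ee t"
    have w1: "cmod w = 1" by (simp add: w_def)
    have U: "UU M n w = w^d * cnj (XX M n w)" using circle[OF w1] by (simp add: d_def)
    have XSn: "XX M (Suc n) w = of_real a * XX M n w + b * w^k * VV M n w"
      unfolding stS by (simp add: a_def b_def d_def k_def)
    have cr: "cnj (XX M n w) * (b * w^k * VV M n w) = b * H w"
      unfolding H_def U by (subst kd) (simp add: power_add algebra_simps)
    have nV: "(cmod (b * w^k * VV M n w))^2 = (cmod b)^2 * ((cmod (XX M n w))^2 - 1)"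
      using det_circle[OF w1, of M n] w1 by (simp add: norm_mult norm_power power_mult_distrib)
    show ?thesis
      unfolding w_def[symmetric] XSn sq_expand cr nV by (simp add: algebra_simps)
  qed
  have "((\<lambda>t. (a^2 + (cmod b)^2) * (cmod (XX M n (ee t)))^2 - (cmod b)^2 + 2 * a * Re (b * H (ee t)))
      has_integral ((a^2 + (cmod b)^2) * I2 M n - (cmod b)^2 + 0)) {0..1}"
  proof -
    have c: "((\<lambda>t. (cmod b)^2) has_integral (cmod b)^2) {0..1::real}"
      using has_integral_const_real[of "(cmod b)^2" 0 1] by simp
    show ?thesis by (intro has_integral_add has_integral_diff has_integral_mult_right I2_has hR c)
  qed
  then have "((\<lambda>t. (cmod (XX M (Suc n) (ee t)))^2) has_integral
       ((a^2 + (cmod b)^2) * I2 M n - (cmod b)^2)) {0..1}"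
    unfolding pt by simp
  then show ?thesis unfolding a_def b_def using I2_has has_integral_unique by blast
qed

lemma I2_bound: "I2 M n \<le> (\<Prod>i<n. (A (M+i))^2 + (cmod (B (M+i)))^2)"
proof (induction n)
  case 0
  have "I2 M 0 = 1" unfolding I2_def by simp
  then show ?case by simp
next
  case (Suc n)
  have c0: "(A (M+n))^2 + (cmod (B (M+n)))^2 \<ge> 0" by simp
  have "I2 M (Suc n) \<le> ((A (M+n))^2 + (cmod (B (M+n)))^2) * I2 M n" using I2_step by simp
  also have "\<dots> \<le> ((A (M+n))^2 + (cmod (B (M+n)))^2) * (\<Prod>i<n. (A (M+i))^2 + (cmod (B (M+i)))^2)"
    by (rule mult_left_mono[OF Suc c0])
  finally show ?case by (simp add: mult.commute)
qed

end

lemma ee_cont': "continuous_on S ee"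
  unfolding ee_def by (intro continuous_intros)

lemma ee_minus_ge: "cmod w < 1 \<Longrightarrow> cmod (ee t - w) \<ge> 1 - cmod w"
  using norm_triangle_ineq2[of "ee t" w] by simp

lemma pk_nonneg: "cmod w < 1 \<Longrightarrow> 0 \<le> pk w t"
  unfolding pk_def by (simp add: abs_square_le_1 power_le_one)

lemma pk_le:
  assumes "cmod w < 1"
  shows "pk w t \<le> (1 + cmod w) / (1 - cmod w)"
proof -
  let ?r = "cmod w"
  have d: "(1 - ?r)^2 \<le> (cmod (ee t - w))^2"
    using ee_minus_ge[OF assms, of t] assms by (intro power_mono) auto
  have p: "(1 - ?r)^2 > 0" using assms by simp
  have n: "1 - ?r^2 \<ge> 0" using assms by (simp add: abs_square_le_1 power_le_one)
  have p2: "(cmod (ee t - w))^2 > 0" using p d by linarith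
  have "pk w t \<le> (1 - ?r^2) / (1 - ?r)^2"
    unfolding pk_def by (rule divide_left_mono[OF d n]) (use p p2 in simp)
  also have "\<dots> = ((1 - ?r) * (1 + ?r)) / ((1 - ?r) * (1 - ?r))"
    by (simp add: power2_eq_square algebra_simps)
  also have "\<dots> = (1 + ?r) / (1 - ?r)" using assms by simp
  finally show ?thesis .
qed

lemma pk_cont:
  assumes "cmod w < 1"
  shows "continuous_on S (pk w)"
proof -
  have "ee t \<noteq> w" for t using assms by (metis norm_ee less_irrefl)
  then show ?thesis unfolding pk_def[abs_def]
    by (intro continuous_intros ee_cont') auto
qed

lemma pk_int:
  assumes "cmod w < 1"
  shows "(pk w has_integral 1) {0..1}"
proof -
  have "((\<lambda>t. of_real (pk w t) * (\<lambda>_. 1::complex) (ee t)) has_integral 1) {0..1}"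
    using poisson[of "\<lambda>_. 1" w] assms by simp
  from has_integral_linear[OF this bounded_linear_Re] show ?thesis by (simp add: o_def)
qed

lemma pk_ind_integrable:
  assumes "cmod w < 1" "S \<in> sets lebesgue"
  shows "(\<lambda>t. pk w t * indicator S t) integrable_on {0..1}"
proof -
  have m: "indicator S \<in> borel_measurable (lebesgue_on {0..1::real})"
    by (rule measurable_restrict_space1) (use assms(2) in auto)
  have b: "bounded (indicator S ` {0..1::real} :: real set)"
    by (rule boundedI[of _ 1]) (auto simp: indicator_def)
  have "(\<lambda>t. indicator S t * pk w t) absolutely_integrable_on {0..1}"
    by (rule absolutely_integrable_bounded_measurable_product_real[OF m _ b])
       (auto intro: absolutely_integrable_continuous_real pk_cont assms)
  then show ?thesis by (simp add: absolutely_integrable_on_def mult.commute)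
qed

lemma aux_alg: fixes x y u v r :: real
  assumes "x^2 + y^2 = 1" "u^2 + v^2 = 1"
  shows "(x - r * u)^2 + (y - r * v)^2 = 1 + r^2 - 2 * r * (x * u + y * v)"
proof -
  have "(x - r * u)^2 + (y - r * v)^2 = (x^2+y^2) + r^2*(u^2+v^2) - 2 * r * (x * u + y * v)"
    by (simp add: power2_eq_square algebra_simps)
  then show ?thesis using assms by simp
qed

lemma aux_trig: fixes a b r :: real shows "(cos a - r * cos b)^2 + (sin a - r * sin b)^2 = 1 + r^2 - 2*r*(cos a * cos b + sin a * sin b)"
  by (rule aux_alg) (simp_all add: add.commute)

lemma norm_ee_diff_sq: "(cmod (ee t - of_real r * ee c))^2 = 1 + r^2 - 2 * r * cos (2*pi*(t - c))"
proof -
  have "(cmod (ee t - of_real r * ee c))^2 = (cos (2*pi*t) - r * cos (2*pi*c))^2 + (sin (2*pi*t) - r * sin (2*pi*c))^2"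
    unfolding cmod_power2 ee_def by simp
  also have "\<dots> = 1 + r^2 - 2 * r * cos (2*pi*t - 2*pi*c)" unfolding aux_trig cos_diff ..
  finally show ?thesis by (simp add: right_diff_distrib)
qed

lemma pk_sin:
  assumes r: "0 < r" "r < 1" and s: "sin (pi * (t - c)) \<noteq> 0"
  shows "pk (of_real r * ee c) t \<le> (1 - r^2) / (4 * r * (sin (pi * (t - c)))^2)"
proof -
  have "cos (2*pi*(t-c)) = 1 - 2 * (sin (pi * (t - c)))^2"
    using cos_double_sin[of "pi * (t - c)"] by (simp add: mult.assoc)
  moreover have "\<forall>C S. C = 1 - 2*S^2 \<longrightarrow> 1 + r^2 - 2*r*C = (1-r)^2 + 4*r*S^2"
    by (intro allI impI) (erule ssubst, simp add: power2_eq_square algebra_simps)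
  ultimately have eq: "(cmod (ee t - of_real r * ee c))^2 = (1 - r)^2 + 4 * r * (sin (pi * (t - c)))^2"
    unfolding norm_ee_diff_sq by blast
  have p: "4 * r * (sin (pi * (t - c)))^2 > 0" using r s by simp
  have "4 * r * (sin (pi * (t - c)))^2 \<le> (cmod (ee t - of_real r * ee c))^2" unfolding eq by simp
  moreover have "1 - r^2 \<ge> 0" using r by (simp add: power_le_one)
  moreover have cr: "cmod (of_real r * ee c) = r" using r by (simp add: norm_mult)
  moreover have p2: "(cmod (ee t - of_real r * ee c))^2 > 0" using p calculation(1) by linarith
  ultimately show ?thesis unfolding pk_def cr
    by (intro divide_left_mono) (use p p2 in \<open>auto intro!: mult_pos_pos\<close>)
qed

lemma cot_le:
  assumes "0 < x" "x < pi"
  shows "cot x \<le> 1 / x"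
proof -
  have "sin 0 - 0 * cos 0 \<le> sin x - x * cos x"
  proof (rule DERIV_nonneg_imp_nondecreasing[of 0 x "\<lambda>x. sin x - x * cos x"])
    fix y assume "0 \<le> y" "y \<le> x"
    then have y: "0 \<le> y \<and> y \<le> x" by simp
    show "\<exists>d. ((\<lambda>x. sin x - x * cos x) has_real_derivative d) (at y) \<and> 0 \<le> d"
      apply (rule exI[of _ "y * sin y"])
      using y assms by (auto intro!: derivative_eq_intros mult_nonneg_nonneg sin_ge_zero simp: algebra_simps)
  qed (use assms in auto)
  then have "x * cos x \<le> sin x" by simp
  moreover have "sin x > 0" using assms by (simp add: sin_gt_zero)
  ultimately show ?thesis using assms by (simp add: cot_def field_simps)
qed

lemma inv_sin2_integral:
  assumes "a \<le> b" "\<And>t. t \<in> {a..b} \<Longrightarrow> sin (pi * (t - c)) \<noteq> 0"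
  shows "((\<lambda>t. 1 / (sin (pi * (t - c)))^2) has_integral (cot (pi * (a - c)) - cot (pi * (b - c))) / pi) {a..b}"
proof -
  have "((\<lambda>t. 1 / (sin (pi * (t - c)))^2) has_integral ((- cot (pi * (b - c)) / pi) - (- cot (pi * (a - c)) / pi))) {a..b}"
  proof (rule fundamental_theorem_of_calculus[OF assms(1)])
    fix t assume t: "t \<in> {a..b}"
    have s: "sin (pi * (t - c)) \<noteq> 0" using assms(2)[OF t] .
    have "((\<lambda>t. - cot (pi * (t - c)) / pi) has_real_derivative (1 / (sin (pi * (t - c)))^2)) (at t)"
      using s by (auto intro!: derivative_eq_intros DERIV_cot[THEN DERIV_chain2] simp: field_simps power2_eq_square)
    then show "((\<lambda>t. - cot (pi * (t - c)) / pi) has_vector_derivative (1 / (sin (pi * (t - c)))^2)) (at t within {a..b})"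
      by (simp add: has_real_derivative_iff_has_vector_derivative has_vector_derivative_at_within)
  qed
  then show ?thesis by (simp add: diff_divide_distrib)
qed

lemma cot_minus: "cot (- x) = - cot (x::real)" by (simp add: cot_def)
lemma cot_pi_minus: "cot (pi - x) = - cot (x::real)" by (simp add: cot_def)

lemma tail_piece:
  assumes "a \<le> b" "\<And>t. t \<in> {a..b} \<Longrightarrow> sin (pi * (t - c)) \<noteq> 0" "0 < r" "r < 1"
  shows "integral {a..b} (pk (of_real r * ee c)) \<le> (1 - r^2) / (4 * r) * ((cot (pi * (a - c)) - cot (pi * (b - c))) / pi)"
proof -
  have w: "cmod (of_real r * ee c) < 1" using assms by (simp add: norm_mult)
  have i1: "(pk (of_real r * ee c) has_integral integral {a..b} (pk (of_real r * ee c))) {a..b}"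
    using pk_cont[OF w] integrable_continuous_interval integrable_integral by blast
  have i2: "((\<lambda>t. (1 - r^2) / (4 * r) * (1 / (sin (pi * (t - c)))^2)) has_integral
     (1 - r^2) / (4 * r) * ((cot (pi * (a - c)) - cot (pi * (b - c))) / pi)) {a..b}"
    by (rule has_integral_mult_right[OF inv_sin2_integral[OF assms(1,2)]])
  show ?thesis
  proof (rule has_integral_le[OF i1 i2])
    fix t assume t: "t \<in> {a..b}"
    show "pk (of_real r * ee c) t \<le> (1 - r^2) / (4 * r) * (1 / (sin (pi * (t - c)))^2)"
      using pk_sin[OF assms(3,4) assms(2)[OF t]] by simp
  qed
qed

lemma tail:
  assumes h: "0 < h" "0 \<le> c - h" "c + h \<le> 1" and r: "0 < r" "r < 1"
  shows "integral {0..1} (\<lambda>t. pk (of_real r * ee c) t * indicator ({0..1} - {c-h..c+h}) t)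
     \<le> (1 - r^2) / (4 * r) * (2 / (pi^2 * h))"
proof -
  define w where "w = of_real r * ee c"
  have w: "cmod w < 1" using r by (simp add: w_def norm_mult)
  define g where "g t = pk w t * indicator ({0..1} - {c-h..c+h}) t" for t
  have gi: "g integrable_on {0..1}" unfolding g_def by (rule pk_ind_integrable[OF w]) auto
  have c1: "c < 1" "0 < c" using h by auto
  have gi1: "g integrable_on {0..c+h}" by (rule integrable_on_subinterval[OF gi]) (use h in auto)
  have "integral {0..c+h} g + integral {c+h..1} g = integral {0..1} g"
    using Henstock_Kurzweil_Integration.integral_combine[where a=0 and c="c+h" and b=1 and f=g] h gi by auto
  moreover have "integral {0..c-h} g + integral {c-h..c+h} g = integral {0..c+h} g"
    using Henstock_Kurzweil_Integration.integral_combine[where a=0 and c="c-h" and b="c+h" and f=g] h gi1 by auto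
  moreover have "integral {c-h..c+h} g = 0"
    by (rule integral_unique, rule has_integral_is_0) (auto simp: g_def)
  moreover have "integral {0..c-h} g = integral {0..c-h} (pk w)"
    by (rule integral_spike[of "{c-h}"]) (use h in \<open>auto simp: g_def indicator_def\<close>)
  moreover have "integral {c+h..1} g = integral {c+h..1} (pk w)"
    by (rule integral_spike[of "{c+h}"]) (use h in \<open>auto simp: g_def indicator_def\<close>)
  moreover have "integral {0..c-h} (pk w) \<le> (1 - r^2) / (4 * r) * ((cot (pi * (0 - c)) - cot (pi * ((c-h) - c))) / pi)"
    unfolding w_def
  proof (rule tail_piece[OF h(2) _ r])
    fix t assume t: "t \<in> {0..c-h}"
    have "sin (pi * (c - t)) > 0" using t c1 h by (intro sin_gt_zero) auto
    then show "sin (pi * (t - c)) \<noteq> 0" by (metis minus_diff_eq mult_minus_right sin_minus neg_0_less_iff_less less_irrefl)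
  qed
  moreover have "integral {c+h..1} (pk w) \<le> (1 - r^2) / (4 * r) * ((cot (pi * ((c+h) - c)) - cot (pi * (1 - c))) / pi)"
    unfolding w_def
  proof (rule tail_piece[OF h(3) _ r])
    fix t assume t: "t \<in> {c+h..1}"
    have "sin (pi * (t - c)) > 0" using t c1 h by (intro sin_gt_zero) auto
    then show "sin (pi * (t - c)) \<noteq> 0" by simp
  qed
  ultimately have "integral {0..1} g \<le> (1 - r^2) / (4 * r) * ((cot (pi * (0 - c)) - cot (pi * ((c-h) - c))) / pi)
      + (1 - r^2) / (4 * r) * ((cot (pi * ((c+h) - c)) - cot (pi * (1 - c))) / pi)"
    by linarith
  also have "\<dots> = (1 - r^2) / (4 * r) * (2 * cot (pi * h) / pi)"
  proof -
    have "cot (pi * (0 - c)) = - cot (pi * c)" using cot_minus[of "pi * c"] by simp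
    moreover have "cot (pi * ((c-h) - c)) = - cot (pi * h)" using cot_minus[of "pi * h"] by simp
    moreover have "cot (pi * (1 - c)) = - cot (pi * c)" using cot_pi_minus[of "pi * c"] by (simp add: right_diff_distrib)
    moreover have "\<And>X a b::real. X*((-a - (-b))/pi) + X*((b - (-a))/pi) = X*(2*b/pi)"
      by (simp add: field_simps)
    moreover have "c + h - c = h" by simp
    ultimately show ?thesis by (simp only:)
  qed
  also have "\<dots> \<le> (1 - r^2) / (4 * r) * (2 * (1 / (pi * h)) / pi)"
  proof -
    have "cot (pi * h) \<le> 1 / (pi * h)" using h by (intro cot_le) auto
    moreover have "(1 - r^2) / (4 * r) \<ge> 0" using r by (simp add: power_le_one)
    ultimately show ?thesis by (intro mult_left_mono divide_right_mono) auto
  qed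
  also have "\<dots> = (1 - r^2) / (4 * r) * (2 / (pi^2 * h))" by (simp add: power2_eq_square)
  finally show ?thesis unfolding g_def w_def .
qed

lemma omega:
  assumes G: "G \<in> sets lebesgue" and h: "0 < h" "0 \<le> c - h" "c + h \<le> 1"
    and meas: "measure lebesgue ({c-h..c+h} - G) \<le> h / 32"
  shows "integral {0..1} (\<lambda>t. pk (of_real (1 - h/2) * ee c) t * indicator ({0..1} - G) t) \<le> 1/4"
proof -
  define r where "r = 1 - h/2"
  define w where "w = of_real r * ee c"
  have h2: "h \<le> 1/2" using h by linarith
  have r: "0 < r" "r < 1" "3/4 \<le> r" using h h2 by (auto simp: r_def)
  have w: "cmod w < 1" using r by (simp add: w_def norm_mult)
  define I where "I = {c-h..c+h}"
  have Il: "I - G \<in> lmeasurable"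
    by (rule bounded_set_imp_lmeasurable) (auto simp: I_def G intro: bounded_subset[OF bounded_closed_interval])
  define f where "f t = pk w t * indicator ({0..1} - G) t" for t
  define f1 where "f1 t = pk w t * indicator ({0..1} - I) t" for t
  define f2 where "f2 t = pk w t * indicator (I - G) t" for t
  have fi: "f integrable_on {0..1}" unfolding f_def by (rule pk_ind_integrable[OF w]) (use G in auto)
  have f1i: "f1 integrable_on {0..1}" unfolding f1_def by (rule pk_ind_integrable[OF w]) (auto simp: I_def)
  have f2i: "f2 integrable_on {0..1}" unfolding f2_def by (rule pk_ind_integrable[OF w]) (use G in \<open>auto simp: I_def\<close>)
  have "integral {0..1} f \<le> integral {0..1} (\<lambda>t. f1 t + f2 t)"
  proof (rule integral_le[OF fi integrable_add[OF f1i f2i]])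
    fix t :: real assume "t \<in> {0..1}"
    show "f t \<le> f1 t + f2 t" using pk_nonneg[OF w, of t]
      by (auto simp: f_def f1_def f2_def indicator_def)
  qed
  also have "\<dots> = integral {0..1} f1 + integral {0..1} f2" by (rule integral_add[OF f1i f2i])
  finally have SA: "integral {0..1} f \<le> integral {0..1} f1 + integral {0..1} f2" .
  have SB: "integral {0..1} f1 \<le> 1/8"
  proof -
    have "integral {0..1} f1 \<le> (1 - r^2) / (4 * r) * (2 / (pi^2 * h))"
      unfolding f1_def w_def I_def using tail[OF h r(1,2)] .
    also have "\<dots> \<le> (h/3) * (2 / (pi^2 * h))"
    proof (rule mult_right_mono)
      have "1 - r^2 \<le> h" using h by (simp add: r_def power2_eq_square algebra_simps)
      moreover have "1 - r^2 \<ge> 0" using r by (simp add: power_le_one)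
      moreover have "3 * h \<le> 4 * r * h" using r h by (intro mult_right_mono) auto
      moreover have "3 * (1 - r^2) \<le> 3 * h" using calculation(1) by simp
      ultimately have "3 * (1 - r^2) \<le> 4 * r * h" by (meson order_trans)
      then show "(1 - r^2) / (4 * r) \<le> h/3" using r by (simp add: field_simps)
    qed (use h in simp)
    also have "\<dots> = 2 / (3 * pi^2)" using h by (simp add: field_simps)
    also have "\<dots> \<le> 1/8"
    proof -
      have "pi^2 \<ge> 3^2" using pi_gt3 by (intro power_mono) auto
      then show ?thesis by (simp add: field_simps)
    qed
    finally show ?thesis .
  qed
  have SC: "integral {0..1} f2 \<le> 1/8"
  proof -
    have pk4: "pk w t \<le> 4 / h" for t
    proof -
      have "pk w t \<le> (1 + r) / (1 - r)" using pk_le[OF w, of t] r by (simp add: w_def norm_mult)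
      also have "\<dots> \<le> 2 / (1 - r)" using r by (intro divide_right_mono) auto
      also have "\<dots> = 4 / h" by (simp add: r_def)
      finally show ?thesis .
    qed
    have sub: "(I - G) \<inter> {0..1} = I - G" using h by (auto simp: I_def)
    have ii: "(indicator (I - G) :: real \<Rightarrow> real) integrable_on {0..1}"
      using integrable_on_indicator[of "I - G" "{0..1}"] Il sub by simp
    have "integral {0..1} f2 \<le> integral {0..1} (\<lambda>t. 4 / h * indicator (I - G) t)"
      by (rule integral_le[OF f2i integrable_on_mult_right[OF ii]])
         (auto simp: f2_def indicator_def pk4)
    also have "\<dots> = 4 / h * integral {0..1} (indicator (I - G))" by simp
    also have "integral {0..1} (indicator (I - G)) = measure lebesgue ((I - G) \<inter> {0..1})"
      by (rule integral_indicator) (simp add: sub Il)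
    also note sub
    also have "4 / h * measure lebesgue (I - G) \<le> 4 / h * (h / 32)"
      using meas h by (intro mult_left_mono) (auto simp: I_def)
    also have "\<dots> = 1/8" using h by simp
    finally show ?thesis .
  qed
  have "integral {0..1} f \<le> 1/4" using SA SB SC by linarith
  then show ?thesis unfolding f_def w_def r_def .
qed


lemma emeasure_lebesgue_Icc': "a \<le> b \<Longrightarrow> emeasure lebesgue {a..b::real} = ennreal (b - a)"
  by (simp add: emeasure_completion main_part_sets emeasure_lborel_Icc)

lemma density_interval:
  assumes G: "G \<in> sets lebesgue" "G \<subseteq> {0..1}" and pos: "0 < measure lebesgue G" and e: "0 < \<epsilon>"
  shows "\<exists>c h. 0 < h \<and> 0 \<le> c - h \<and> c + h \<le> 1 \<and> measure lebesgue ({c-h..c+h} - G) \<le> \<epsilon> * (2*h)"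
proof (rule ccontr)
  assume "\<not> ?thesis"
  then have H: "\<And>c h. 0 < h \<Longrightarrow> 0 \<le> c - h \<Longrightarrow> c + h \<le> 1 \<Longrightarrow> \<epsilon> * (2*h) < measure lebesgue ({c-h..c+h} - G)"
    by (meson not_le)
  define G' where "G' = G \<inter> {0<..<1}"
  have G'l: "G' \<in> sets lebesgue" unfolding G'_def by (intro sets.Int) (use G in simp_all)
  have Gb: "G \<in> lmeasurable" using G by (intro bounded_set_imp_lmeasurable) (auto intro: bounded_subset[OF bounded_closed_interval])
  have G'b: "G' \<in> lmeasurable" using G'l G by (intro bounded_set_imp_lmeasurable) (auto simp: G'_def intro: bounded_subset[OF bounded_closed_interval])
  have "G - G' \<subseteq> {0,1}" using G by (auto simp: G'_def)
  then have "negligible (G - G')" by (rule negligible_subset[rotated]) auto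
  then have N: "G - G' \<in> null_sets lebesgue" by (simp add: negligible_iff_null_sets)
  have "G' = G - (G - G')" by (auto simp: G'_def)
  then have mG': "measure lebesgue G' = measure lebesgue G"
    using measure_Diff_null_set[OF G(1) N] by simp
  then have posG': "0 < measure lebesgue G'" using pos by simp
  have pe: "0 < \<epsilon> * measure lebesgue G'" using e posG' by simp
  obtain T where T: "open T" "G' \<subseteq> T" "T - G' \<in> lmeasurable" "emeasure lebesgue (T - G') < ennreal (\<epsilon> * measure lebesgue G')"
    by (rule sets_lebesgue_outer_open[OF G'l pe])
  define T' where "T' = T \<inter> {0<..<1}"
  have T': "open T'" "G' \<subseteq> T'" "T' \<subseteq> {0<..<1}" using T by (auto simp: T'_def G'_def)
  define K where "K = {(x, d). x \<in> G' \<and> 0 < d \<and> cball x d \<subseteq> T'}"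
  have cov: "\<exists>i. i \<in> K \<and> x \<in> cball (fst i) (snd i) \<and> snd i < d" if "x \<in> G'" "0 < d" for x d
  proof -
    have xT: "x \<in> T'" using T'(2) that(1) by blast
    obtain e0 where e0: "0 < e0" "ball x e0 \<subseteq> T'" using open_contains_ball_eq[OF T'(1)] xT by blast
    define d' where "d' = min (d/2) (e0/2)"
    have "cball x d' \<subseteq> ball x e0" using e0 by (auto simp: d'_def)
    then have "(x, d') \<in> K" using e0 that by (auto simp: K_def d'_def)
    then show ?thesis using that e0 by (intro exI[of _ "(x, d')"]) (auto simp: d'_def)
  qed
  obtain C where C: "countable C" "C \<subseteq> K"
     "pairwise (\<lambda>i j. disjnt (cball (fst i) (snd i)) (cball (fst j) (snd j))) C"
     "negligible (G' - (\<Union>i \<in> C. cball (fst i) (snd i)))"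
  proof -
    have pos: "\<And>i. i \<in> K \<Longrightarrow> 0 < snd i" by (auto simp: K_def)
    show ?thesis by (rule Vitali_covering_theorem_cballs[where K=K and r=snd and S=G' and a=fst, OF pos cov]) (assumption | rule that)+
  qed
  define Bl where "Bl i = cball (fst i) (snd i)" for i :: "real \<times> real"
  have Bl_Icc: "Bl i = {fst i - snd i .. fst i + snd i}" for i by (simp add: Bl_def cball_eq_atLeastAtMost)
  have BlK: "0 < snd i \<and> 0 \<le> fst i - snd i \<and> fst i + snd i \<le> 1" if "i \<in> C" for i
  proof -
    have "i \<in> K" using that C by auto
    then have "0 < snd i" "Bl i \<subseteq> {0<..<1}" using T' by (auto simp: K_def Bl_def)
    moreover have "fst i - snd i \<in> Bl i" "fst i + snd i \<in> Bl i" using \<open>0 < snd i\<close> by (auto simp: Bl_Icc)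
    ultimately have "fst i - snd i \<in> {0<..<1}" "fst i + snd i \<in> {0<..<1}" by auto
    then show ?thesis using \<open>0 < snd i\<close> by auto
  qed
  have disj: "disjoint_family_on Bl C" using C(3)
    by (auto simp: disjoint_family_on_def pairwise_def disjnt_def Bl_def)
  have disj2: "disjoint_family_on (\<lambda>i. Bl i - G) C" using disj
    unfolding disjoint_family_on_def by blast
  have Blm: "Bl i \<in> sets lebesgue" for i by (simp add: Bl_def)
  have emB: "emeasure lebesgue (Bl i) \<le> ennreal (1/\<epsilon>) * emeasure lebesgue (Bl i - G)" if "i \<in> C" for i
  proof -
    note b = BlK[OF that]
    have l: "Bl i - G \<in> lmeasurable"
      by (rule bounded_set_imp_lmeasurable[OF bounded_subset[OF bounded_cball[of "fst i" "snd i"]]])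
         (auto simp: Bl_def intro!: sets.Diff G(1))
    have "\<epsilon> * (2 * snd i) < measure lebesgue (Bl i - G)" using H[of "snd i" "fst i"] b by (simp add: Bl_Icc)
    then have "2 * snd i \<le> (1/\<epsilon>) * measure lebesgue (Bl i - G)" using e by (simp add: field_simps)
    then have "ennreal (2 * snd i) \<le> ennreal ((1/\<epsilon>) * measure lebesgue (Bl i - G))" by (rule ennreal_leI)
    also have "\<dots> = ennreal (1/\<epsilon>) * ennreal (measure lebesgue (Bl i - G))"
      by (rule ennreal_mult) (use e in auto)
    also have "ennreal (measure lebesgue (Bl i - G)) = emeasure lebesgue (Bl i - G)"
      by (rule emeasure_eq_measure2[symmetric, OF l])
    also have "ennreal (2 * snd i) = emeasure lebesgue (Bl i)"
      unfolding Bl_Icc using b by (subst emeasure_lebesgue_Icc') auto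
    finally show ?thesis .
  qed
  have UB: "(\<Union>i\<in>C. Bl i) \<in> sets lebesgue" by (rule sets.countable_UN''[OF C(1) Blm])
  have "emeasure lebesgue G' \<le> emeasure lebesgue ((\<Union>i\<in>C. Bl i) \<union> (G' - (\<Union>i\<in>C. Bl i)))"
    by (rule emeasure_mono) (auto intro!: sets.Un UB G'l)
  also have "\<dots> \<le> emeasure lebesgue (\<Union>i\<in>C. Bl i) + emeasure lebesgue (G' - (\<Union>i\<in>C. Bl i))"
    by (rule emeasure_subadditive) (auto intro!: UB G'l)
  also have "emeasure lebesgue (G' - (\<Union>i\<in>C. Bl i)) = 0"
  proof -
    have "G' - (\<Union>i\<in>C. Bl i) \<in> sets lebesgue" by (intro sets.Diff G'l UB)
    from negligible_iff_emeasure0[OF this] C(4) show ?thesis unfolding Bl_def by blast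
  qed
  also have "emeasure lebesgue (\<Union>i\<in>C. Bl i) = (\<integral>\<^sup>+ i. emeasure lebesgue (Bl i) \<partial>count_space C)"
    by (rule emeasure_UN_countable[OF Blm C(1) disj])
  also have "\<dots> \<le> (\<integral>\<^sup>+ i. ennreal (1/\<epsilon>) * emeasure lebesgue (Bl i - G) \<partial>count_space C)"
    by (rule nn_integral_mono) (use emB in simp)
  also have "\<dots> = ennreal (1/\<epsilon>) * (\<integral>\<^sup>+ i. emeasure lebesgue (Bl i - G) \<partial>count_space C)"
    by (rule nn_integral_cmult) simp
  also have "(\<integral>\<^sup>+ i. emeasure lebesgue (Bl i - G) \<partial>count_space C) = emeasure lebesgue (\<Union>i\<in>C. Bl i - G)"
    by (rule emeasure_UN_countable[symmetric, OF _ C(1) disj2]) (intro sets.Diff Blm G(1))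
  also have "emeasure lebesgue (\<Union>i\<in>C. Bl i - G) \<le> emeasure lebesgue (T - G')"
  proof (rule emeasure_mono)
    show "(\<Union>i\<in>C. Bl i - G) \<subseteq> T - G'"
    proof
      fix x assume "x \<in> (\<Union>i\<in>C. Bl i - G)"
      then obtain i where i: "i \<in> C" "x \<in> Bl i" "x \<notin> G" by blast
      then have "i \<in> K" using C(2) by auto
      then have "Bl i \<subseteq> T" by (auto simp: K_def Bl_def T'_def)
      then show "x \<in> T - G'" using i by (auto simp: G'_def)
    qed
    show "T - G' \<in> sets lebesgue" using T(3) by (simp add: fmeasurable_def)
  qed
  finally have "emeasure lebesgue G' \<le> ennreal (1/\<epsilon>) * emeasure lebesgue (T - G')"
    by (simp add: mult_left_mono)
  also have "\<dots> < ennreal (1/\<epsilon>) * ennreal (\<epsilon> * measure lebesgue G')"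
    by (rule ennreal_mult_strict_left_mono[OF T(4)]) (use e in auto)
  also have "\<dots> = ennreal ((1/\<epsilon>) * (\<epsilon> * measure lebesgue G'))"
    by (rule ennreal_mult[symmetric]) (use e posG' in auto)
  also have "\<dots> = ennreal (measure lebesgue G')" using e by simp
  also have "\<dots> = emeasure lebesgue G'" by (rule emeasure_eq_measure2[symmetric, OF G'b])
  finally show False by simp
qed


context lacu begin

lemma A_ge1: "1 \<le> A j"
proof (rule ccontr)
  assume "\<not> 1 \<le> A j"
  then have "A j * A j < 1 * 1" using Apos[of j] by (intro mult_strict_mono) auto
  moreover have "(A j)^2 = 1 + (cmod (B j))^2" using AB[of j] by simp
  ultimately show False by (simp add: power2_eq_square)
qed

lemma AB_sum: "(A j)^2 + (cmod (B j))^2 = 2 * (A j)^2 - 1"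
  using AB[of j] by simp

lemma ln_AB_nonneg: "0 \<le> ln ((A j)^2 + (cmod (B j))^2)"
proof -
  have "1 \<le> (A j)^2" using A_ge1[of j] by (simp add: one_le_power)
  then show ?thesis unfolding AB_sum by simp
qed

lemma ln_AB_le: "ln ((A j)^2 + (cmod (B j))^2) \<le> 4 * ln (A j)"
proof -
  have a1: "1 \<le> (A j)^2" using A_ge1[of j] by (simp add: one_le_power)
  have "2 * (A j)^2 - 1 \<le> (A j)^4"
  proof -
    have "0 \<le> ((A j)^2 - 1)^2" by simp
    then show ?thesis by (simp add: power2_eq_square power4_eq_xxxx algebra_simps)
  qed
  then have "ln ((A j)^2 + (cmod (B j))^2) \<le> ln ((A j)^4)"
    unfolding AB_sum using a1 by (intro ln_mono) auto
  also have "\<dots> = 4 * ln (A j)" using Apos[of j] by (simp add: ln_realpow)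
  finally show ?thesis .
qed

lemma rep0: "prodL (factor m A B t) N = mat2 (cnj (XX 0 N (ee t))) (YY 0 N (ee t)) (cnj (YY 0 N (ee t))) (XX 0 N (ee t))"
  using prod_rep[of t 0 N] by simp

lemma tail_entry:
  assumes "cmod (XX 0 M (ee t)) \<le> k" "cmod (YY 0 M (ee t)) \<le> k"
    "cmod (XX 0 (M+n) (ee t)) \<le> k" "cmod (YY 0 (M+n) (ee t)) \<le> k"
  shows "cmod (XX M n (ee t)) \<le> 2 * k^2"
proof -
  define a where "a = XX 0 M (ee t)"
  define b where "b = YY 0 M (ee t)"
  define a' where "a' = XX 0 (M+n) (ee t)"
  define b' where "b' = YY 0 (M+n) (ee t)"
  define x where "x = XX M n (ee t)"
  define y where "y = YY M n (ee t)"
  have "prodL (factor m A B t) (M+n) = prodL (factor m A B t) M ** prodL (\<lambda>j. factor m A B t (M+j)) n"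
    by (rule prodL_add)
  then have eq: "mat2 (cnj a') b' (cnj b') a' = mat2 (cnj a) b (cnj b) a ** mat2 (cnj x) y (cnj y) x"
    unfolding rep0 prod_rep a_def b_def a'_def b'_def x_def y_def .
  have e1: "cnj a' = cnj a * cnj x + b * cnj y"
    using arg_cong[OF eq, of "\<lambda>P::complex^2^2. P $ 1 $ 1"] by (simp add: mat2_mult mat2_nth)
  have e2: "cnj b' = cnj b * cnj x + a * cnj y"
    using arg_cong[OF eq, of "\<lambda>P::complex^2^2. P $ 2 $ 1"] by (simp add: mat2_mult mat2_nth)
  have w1: "cmod (ee t) = 1" by simp
  have d: "(cmod a)^2 - (cmod b)^2 = 1"
    using det_circle[OF w1, of 0 M] norm_VY[OF w1, of 0 M] by (simp add: a_def b_def)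
  have "a * cnj a - b * cnj b = of_real ((cmod a)^2 - (cmod b)^2)"
    by (simp only: of_real_diff complex_norm_square)
  then have ab1: "a * cnj a - b * cnj b = 1" using d by simp
  have "a * cnj a' - b * cnj b' = (a * cnj a - b * cnj b) * cnj x"
    unfolding e1 e2 by (simp add: algebra_simps)
  then have cx: "cnj x = a * cnj a' - b * cnj b'" using ab1 by simp
  have "cmod x = cmod (a * cnj a' - b * cnj b')" using cx by (metis complex_mod_cnj)
  also have "\<dots> \<le> cmod a * cmod a' + cmod b * cmod b'"
    using norm_triangle_ineq4[of "a * cnj a'" "b * cnj b'"] by (simp add: norm_mult)
  also have "\<dots> \<le> k * k + k * k"
  proof -
    have k0: "0 \<le> k" using assms(1) by (meson norm_ge_zero order_trans)
    show ?thesis using assms k0 by (intro add_mono mult_mono) (auto simp: a_def b_def a'_def b'_def)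
  qed
  finally show ?thesis by (simp add: x_def power2_eq_square)
qed

lemma good_set:
  assumes Emeas: "E \<in> sets lebesgue" and Esub: "E \<subseteq> {0..<1}" and Epos: "emeasure lebesgue E > 0"
   and conv: "\<And>t. t \<in> E \<Longrightarrow> \<exists>L\<in>SU11. (\<lambda>N. prodL (factor m A B t) N) \<longlonglongrightarrow> L"
  shows "\<exists>G K. G \<in> sets lebesgue \<and> G \<subseteq> {0..1} \<and> 0 < measure lebesgue G \<and> 1 \<le> K \<and>
     (\<forall>t\<in>G. \<forall>M n. cmod (XX M n (ee t)) \<le> 2*K^2)"
proof -
  define Gk where "Gk k = {t \<in> E. \<forall>N. cmod (XX 0 N (ee t)) \<le> real k \<and> cmod (YY 0 N (ee t)) \<le> real k}" for k :: nat
  have cover: "E \<subseteq> (\<Union>k. Gk k)"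
  proof
    fix t assume t: "t \<in> E"
    obtain L where "(\<lambda>N. prodL (factor m A B t) N) \<longlonglongrightarrow> L" using conv[OF t] by blast
    then have "Bseq (\<lambda>N. prodL (factor m A B t) N)" by (intro convergent_imp_Bseq convergentI)
    then obtain Kb where Kb: "\<And>N. norm (prodL (factor m A B t) N) \<le> Kb" unfolding Bseq_def by auto
    obtain k :: nat where k: "Kb \<le> real k" using real_arch_simple by blast
    have "cmod (XX 0 N (ee t)) \<le> real k \<and> cmod (YY 0 N (ee t)) \<le> real k" for N
    proof -
      have "cmod (prodL (factor m A B t) N $ 2 $ 2) \<le> norm (prodL (factor m A B t) N)"
        by (rule order_trans[OF Finite_Cartesian_Product.norm_nth_le Finite_Cartesian_Product.norm_nth_le])
      moreover have "cmod (prodL (factor m A B t) N $ 1 $ 2) \<le> norm (prodL (factor m A B t) N)"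
        by (rule order_trans[OF Finite_Cartesian_Product.norm_nth_le Finite_Cartesian_Product.norm_nth_le])
      ultimately show ?thesis using Kb[of N] k unfolding rep0 mat2_nth by linarith
    qed
    then show "t \<in> (\<Union>k. Gk k)" using t by (auto simp: Gk_def)
  qed
  have Gkm: "Gk k \<in> sets lebesgue" for k
  proof -
    have cl: "closed {t. \<forall>N. cmod (XX 0 N (ee t)) \<le> real k \<and> cmod (YY 0 N (ee t)) \<le> real k}"
      by (intro closed_Collect_all closed_Collect_conj closed_Collect_le continuous_intros cont_circ
          continuous_on_compose2[OF contXX(3) ee_cont']) auto
    have "Gk k = E \<inter> {t. \<forall>N. cmod (XX 0 N (ee t)) \<le> real k \<and> cmod (YY 0 N (ee t)) \<le> real k}"
      by (auto simp: Gk_def)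
    moreover have "{t. \<forall>N. cmod (XX 0 N (ee t)) \<le> real k \<and> cmod (YY 0 N (ee t)) \<le> real k} \<in> sets lebesgue"
      using cl by simp
    ultimately show ?thesis using Emeas by simp
  qed
  obtain k where k: "0 < emeasure lebesgue (Gk k)"
  proof (rule ccontr)
    assume "\<not> thesis"
    then have "\<And>k. emeasure lebesgue (Gk k) = 0" using that by (metis not_gr_zero)
    then have "\<And>k. Gk k \<in> null_sets lebesgue" using Gkm by (simp add: null_sets_def)
    then have "(\<Union>k. Gk k) \<in> null_sets lebesgue" by (intro null_sets_UN) auto
    then have "E \<in> null_sets lebesgue" using cover Emeas by (blast intro: null_sets_subset)
    then show False using Epos by (simp add: null_sets_def)
  qed
  define G where "G = Gk k"
  define K where "K = real k + 1"
  have Gs: "G \<subseteq> {0..1}" using Esub by (auto simp: G_def Gk_def)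
  have Gl: "G \<in> lmeasurable"
    by (rule bounded_set_imp_lmeasurable[OF bounded_subset[OF bounded_closed_interval Gs]]) (simp add: G_def Gkm)
  have mpos: "0 < measure lebesgue G"
    using k emeasure_eq_measure2[OF Gl] by (simp add: G_def)
  have bnd: "\<forall>t\<in>G. \<forall>M n. cmod (XX M n (ee t)) \<le> 2*K^2"
  proof (intro ballI allI)
    fix t M n assume t: "t \<in> G"
    have "cmod (XX M n (ee t)) \<le> 2 * (real k)^2"
      by (rule tail_entry) (use t in \<open>auto simp: G_def Gk_def\<close>)
    also have "\<dots> \<le> 2 * K^2" by (simp add: K_def power_mono)
    finally show "cmod (XX M n (ee t)) \<le> 2*K^2" .
  qed
  show ?thesis
    by (rule exI[of _ G], rule exI[of _ K]) (use Gkm Gs mpos bnd in \<open>auto simp: G_def K_def\<close>)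
qed

lemma m_ge: "j \<le> m j"
proof (induction j)
  case 0 then show ?case by simp
next
  case (Suc j)
  have "real (m (Suc j)) \<ge> 3 * real (m j)" by (rule m_ge3)
  then have "m (Suc j) \<ge> 3 * m j" by simp
  moreover have "m j \<ge> 1" using mpos[of j] by simp
  ultimately show ?case using Suc by linarith
qed

lemma main_bound:
  assumes G: "G \<in> sets lebesgue" "G \<subseteq> {0..1}" and K: "1 \<le> K"
   and bnd: "\<forall>t\<in>G. \<forall>M n. cmod (XX M n (ee t)) \<le> 2*K^2"
   and h: "0 < h" "0 \<le> c - h" "c + h \<le> 1" and meas: "measure lebesgue ({c-h..c+h} - G) \<le> h/32"
  shows "\<exists>M C. \<forall>n. (\<Sum>i<n. ln (A (M+i))) \<le> C"
proof -
  define r where "r = 1 - h/2"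
  have h2: "h \<le> 1/2" using h by linarith
  have r: "0 < r" "r < 1" using h h2 by (auto simp: r_def)
  define w0 where "w0 = of_real r * ee c"
  have w0: "cmod w0 = r" using r by (simp add: w0_def norm_mult)
  have w01: "cmod w0 < 1" using w0 r by simp
  have w01': "cmod w0 \<le> 1" using w01 by simp
  define chi :: "real \<Rightarrow> real" where "chi t = indicator ({0..1} - G) t" for t
  have GG: "{0..1} - G \<in> sets lebesgue" using G by (intro sets.Diff) auto
  have om: "integral {0..1} (\<lambda>t. pk w0 t * chi t) \<le> 1/4"
    using omega[OF G(1) h meas] by (simp add: w0_def r_def chi_def)
  have omi: "(\<lambda>t. pk w0 t * chi t) integrable_on {0..1}"
    unfolding chi_def by (rule pk_ind_integrable[OF w01 GG])
  have pk4: "pk w0 t \<le> 4 / h" for t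
  proof -
    have "pk w0 t \<le> (1 + r) / (1 - r)" using pk_le[OF w01, of t] w0 by simp
    also have "\<dots> \<le> 2 / (1 - r)" using r by (intro divide_right_mono) auto
    also have "\<dots> = 4 / h" by (simp add: r_def)
    finally show ?thesis .
  qed
  define s where "s = sqrt r"
  have s: "0 < s" "s < 1" "s^2 = r" using r by (auto simp: s_def)
  obtain M where M: "s^M < (1 - s)/2" using real_arch_pow_inv[of "(1-s)/2" s] s by auto
  have sumsmall: "(\<Sum>i<n. r ^ (m(M+i) - Dg M i)) \<le> 1/2" for n
  proof -
    have tm: "r ^ (m(M+i) - Dg M i) \<le> s^M * s^i" for i
    proof -
      have e: "M + i \<le> 2 * (m(M+i) - Dg M i)" using Dlt[of M i] m_ge[of "M+i"] by linarith
      have "r ^ (m(M+i) - Dg M i) = s ^ (2 * (m(M+i) - Dg M i))" using s by (simp add: power_mult)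
      also have "\<dots> \<le> s ^ (M + i)" using e s by (intro power_decreasing) auto
      finally show ?thesis by (simp add: power_add)
    qed
    have "(\<Sum>i<n. r ^ (m(M+i) - Dg M i)) \<le> (\<Sum>i<n. s^M * s^i)" by (intro sum_mono tm)
    also have "\<dots> = s^M * ((1 - s^n) / (1 - s))" using s by (simp add: sum_distrib_left[symmetric] sum_gp_strict)
    also have "\<dots> \<le> s^M * (1 / (1 - s))"
      using s by (intro mult_left_mono divide_right_mono) auto
    also have "\<dots> \<le> 1/2" using M s by (simp add: field_simps)
    finally show ?thesis .
  qed
  define L where "L n = (\<Sum>i<n. ln (A (M+i)))" for n
  define Lam where "Lam n = (\<Sum>i<n. ln ((A (M+i))^2 + (cmod (B (M+i)))^2))" for n
  define kap where "kap = ln (2*K^2)"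
  have "1 \<le> K^2" using K by (simp add: one_le_power)
  then have K2: "1 \<le> 2*K^2" by linarith
  have kap0: "0 \<le> kap" using K2 by (simp add: kap_def)
  have key: "L n \<le> 2 * (kap + 2/h + ln 2)" for n
  proof -
    define X where "X t = XX M n (ee t)" for t
    define F where "F = FF M n"
    define P where "P = (\<Prod>i<n. A (M+i))"
    define lam where "lam = (\<Prod>i<n. (A (M+i))^2 + (cmod (B (M+i)))^2)"
    have P0: "0 < P" unfolding P_def using Apos by (intro prod_pos) auto
    have fac1: "1 \<le> (A j)^2 + (cmod (B j))^2" for j using ln_AB_nonneg[of j] AB_sum[of j] A_ge1[of j]
      by (smt (verit) one_le_power)
    have lam0: "0 < lam" unfolding lam_def using fac1 by (intro prod_pos) (smt (verit))
    have nz: "(A j)^2 + (cmod (B j))^2 \<noteq> 0" for j using fac1[of j] by linarith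
    have lnlam: "ln lam = Lam n" unfolding lam_def Lam_def
      by (subst ln_prod) (auto simp del: sum_power2_eq_zero_iff simp add: nz)
    have Lam0: "0 \<le> Lam n" unfolding Lam_def by (intro sum_nonneg ln_AB_nonneg)
    have LamL: "Lam n \<le> 4 * L n" unfolding Lam_def L_def sum_distrib_left by (intro sum_mono ln_AB_le)
    have lnP: "ln P = L n" unfolding P_def L_def using Apos
      by (subst ln_prod) (auto simp: less_imp_neq[symmetric])
    have lowb: "L n - ln 2 \<le> ln (cmod (XX M n w0))"
    proof -
      have "P * (1 - (\<Sum>i<n. cmod w0 ^ (m(M+i) - Dg M i))) \<le> cmod (XX M n w0)"
        using lower[OF w01', of M n] by (simp add: P_def)
      moreover have "P / 2 \<le> P * (1 - (\<Sum>i<n. cmod w0 ^ (m(M+i) - Dg M i)))"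
        using sumsmall[of n] P0 w0 by (simp add: field_simps)
      ultimately have "P / 2 \<le> cmod (XX M n w0)" by linarith
      then have "ln (P / 2) \<le> ln (cmod (XX M n w0))" using P0 by (intro ln_mono) auto
      then show ?thesis using P0 lnP by (simp add: ln_div)
    qed
    have lnw0: "ln (cmod (XX M n w0)) = L n + Re (F w0)"
      using ln_XX[OF w01', of M n] by (simp add: L_def F_def)
    have pois: "((\<lambda>t. pk w0 t * Re (F (ee t))) has_integral Re (F w0)) {0..1}"
    proof -
      have "((\<lambda>t. of_real (pk w0 t) * F (ee t)) has_integral F w0) {0..1}"
        unfolding F_def by (rule poisson[OF FF_cont FF_hol w01])
      from has_integral_linear[OF this bounded_linear_Re] show ?thesis by (simp add: o_def)
    qed
    have ReF: "Re (F (ee t)) = ln (cmod (X t)) - L n" for t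
      using ln_XX[of "ee t" M n] by (simp add: X_def F_def L_def)
    have X0: "X t \<noteq> 0" for t using disk[of "ee t" M n] by (simp add: X_def)
    have Xc: "continuous_on {0..1} X" unfolding X_def by (rule cont_circ)
    have J2i: "(\<lambda>t. pk w0 t * (cmod (X t))^2) integrable_on {0..1}"
      by (intro integrable_continuous_interval continuous_intros pk_cont[OF w01] Xc)
    define J2 where "J2 = integral {0..1} (\<lambda>t. pk w0 t * (cmod (X t))^2)"
    define J3 where "J3 = integral {0..1} (\<lambda>t. pk w0 t * chi t)"
    have J2le: "J2 \<le> (4/h) * lam"
    proof -
      have "J2 \<le> integral {0..1} (\<lambda>t. (4/h) * (cmod (X t))^2)"
        unfolding J2_def
      proof (rule integral_le[OF J2i])
        show "(\<lambda>t. (4/h) * (cmod (X t))^2) integrable_on {0..1}"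
          by (intro integrable_continuous_interval continuous_intros Xc)
        fix t :: real assume "t \<in> {0..1}"
        show "pk w0 t * (cmod (X t))^2 \<le> (4/h) * (cmod (X t))^2"
          using pk4[of t] by (intro mult_right_mono) auto
      qed
      also have "\<dots> = (4/h) * I2 M n" by (simp add: I2_def X_def)
      also have "\<dots> \<le> (4/h) * lam" using I2_bound[of M n] h by (intro mult_left_mono) (auto simp: lam_def)
      finally show ?thesis .
    qed
    define U where "U = kap * 1 + (1/(2*lam)) * J2 + (Lam n / 2) * J3 - L n * 1"
    have uhas: "((\<lambda>t. kap * pk w0 t + (1/(2*lam)) * (pk w0 t * (cmod (X t))^2) + (Lam n / 2) * (pk w0 t * chi t)
        - L n * pk w0 t) has_integral U) {0..1}"
      unfolding U_def J2_def J3_def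
      by (intro has_integral_add has_integral_diff has_integral_mult_right
          pk_int[OF w01] integrable_integral J2i omi)
    have "Re (F w0) \<le> U"
    proof (rule has_integral_le[OF pois uhas])
      fix t :: real assume t: "t \<in> {0..1}"
      have pk0: "0 \<le> pk w0 t" by (rule pk_nonneg[OF w01])
      have lnX: "ln (cmod (X t)) \<le> kap + (cmod (X t))^2 / (2*lam) + (Lam n / 2) * chi t"
      proof (cases "t \<in> G")
        case True
        have "cmod (X t) \<le> 2*K^2" using bnd True by (simp add: X_def)
        then have "ln (cmod (X t)) \<le> kap" unfolding kap_def using X0[of t] by (intro ln_mono) auto
        moreover have "0 \<le> (cmod (X t))^2 / (2*lam)" using lam0 by simp
        moreover have "0 \<le> (Lam n / 2) * chi t" using Lam0 by (simp add: chi_def)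
        ultimately show ?thesis by linarith
      next
        case False
        then have c1: "chi t = 1" using t by (simp add: chi_def)
        have y0: "0 < (cmod (X t))^2" using X0[of t] by simp
        have "ln ((cmod (X t))^2 / lam) \<le> (cmod (X t))^2 / lam - 1"
          using y0 lam0 by (intro ln_le_minus_one) simp
        then have "ln ((cmod (X t))^2) - ln lam \<le> (cmod (X t))^2 / lam"
          using y0 lam0 by (simp add: ln_div)
        moreover have "ln ((cmod (X t))^2) = 2 * ln (cmod (X t))" using X0[of t] by (simp add: ln_realpow)
        ultimately have "ln (cmod (X t)) \<le> (cmod (X t))^2 / (2*lam) + Lam n / 2"
          using lnlam by (simp add: field_simps)
        then show ?thesis using c1 kap0 by simp
      qed
      have "pk w0 t * Re (F (ee t)) = pk w0 t * (ln (cmod (X t)) - L n)" by (simp add: ReF)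
      also have "\<dots> \<le> pk w0 t * (kap + (cmod (X t))^2 / (2*lam) + (Lam n / 2) * chi t - L n)"
        using lnX pk0 by (intro mult_left_mono) auto
      also have "\<dots> = kap * pk w0 t + (1/(2*lam)) * (pk w0 t * (cmod (X t))^2) + (Lam n / 2) * (pk w0 t * chi t)
        - L n * pk w0 t" by (simp add: algebra_simps)
      finally show "pk w0 t * Re (F (ee t)) \<le> kap * pk w0 t + (1/(2*lam)) * (pk w0 t * (cmod (X t))^2)
         + (Lam n / 2) * (pk w0 t * chi t) - L n * pk w0 t" .
    qed
    moreover have "(1/(2*lam)) * J2 \<le> 2/h"
    proof -
      have "(1/(2*lam)) * J2 \<le> (1/(2*lam)) * ((4/h) * lam)" using J2le lam0 by (intro mult_left_mono) auto
      also have "\<dots> = 2/h" using lam0 by (simp add: field_simps)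
      finally show ?thesis .
    qed
    moreover have "(Lam n / 2) * J3 \<le> (Lam n / 2) * (1/4)" using om Lam0 by (intro mult_left_mono) (auto simp: J3_def)
    ultimately have "Re (F w0) \<le> kap + 2/h + Lam n / 8 - L n" unfolding U_def by linarith
    then have "L n - ln 2 \<le> kap + 2/h + Lam n / 8" using lowb lnw0 by linarith
    moreover have "Lam n / 8 \<le> L n / 2" using LamL by linarith
    ultimately have "L n / 2 \<le> kap + 2/h + ln 2" by linarith
    from mult_left_mono[OF this, of 2] show ?thesis by simp
  qed
  show ?thesis using key by (auto simp: L_def)
qed

end

theorem theorem1p3:
  fixes m :: "nat \<Rightarrow> nat" and q :: real and A :: "nat \<Rightarrow> real" and B :: "nat \<Rightarrow> complex"
    and E :: "real set"
  assumes q: "q \<ge> 3"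
    and mpos: "\<And>j. m j > 0"
    and mmono: "strict_mono m"
    and lac: "\<And>j. real (m (Suc j)) \<ge> q * real (m j)"
    and Apos: "\<And>j. A j > 0"
    and AB: "\<And>j. (A j)\<^sup>2 - (cmod (B j))\<^sup>2 = 1"
    and Emeas: "E \<in> sets lebesgue" and Esub: "E \<subseteq> {0..<1}"
    and Epos: "emeasure lebesgue E > 0"
    and conv: "\<And>t. t \<in> E \<Longrightarrow> \<exists>L\<in>SU11. (\<lambda>N. prodL (factor m A B t) N) \<longlonglongrightarrow> L"
  shows "summable (\<lambda>j. ln ((A j)\<^sup>2 + (cmod (B j))\<^sup>2))"
proof -
  interpret lacu m q A B using q mpos lac Apos AB by unfold_locales
  show ?thesis
  proof (rule ccontr)
    assume ns: "\<not> summable (\<lambda>j. ln ((A j)\<^sup>2 + (cmod (B j))\<^sup>2))"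
    obtain G K where G: "G \<in> sets lebesgue" "G \<subseteq> {0..1}" "0 < measure lebesgue G" "1 \<le> K"
        "\<forall>t\<in>G. \<forall>M n. cmod (XX M n (ee t)) \<le> 2*K^2"
      using good_set[OF Emeas Esub Epos conv] by blast
    obtain c h where ch: "0 < h" "0 \<le> c - h" "c + h \<le> 1" "measure lebesgue ({c-h..c+h} - G) \<le> (1/64) * (2*h)"
      using density_interval[OF G(1,2,3), of "1/64"] by auto
    have meas: "measure lebesgue ({c-h..c+h} - G) \<le> h/32" using ch(4) by simp
    obtain M C where MC: "\<forall>n. (\<Sum>i<n. ln (A (M+i))) \<le> C"
      using main_bound[OF G(1,2,4,5) ch(1,2,3) meas] by blast
    have "summable (\<lambda>i. ln (A (i + M)))"
    proof (rule summableI_nonneg_bounded[of _ C])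
      fix n show "0 \<le> ln (A (n + M))" using A_ge1[of "n+M"] by simp
      show "(\<Sum>i<n. ln (A (i + M))) \<le> C" using MC by (simp add: add.commute)
    qed
    then have sA: "summable (\<lambda>j. ln (A j))" using summable_iff_shift by blast
    have "summable (\<lambda>j. 4 * ln (A j))" by (rule summable_mult[OF sA])
    then have "summable (\<lambda>j. ln ((A j)\<^sup>2 + (cmod (B j))\<^sup>2))"
      by (rule summable_comparison_test'[where N=0]) (use ln_AB_nonneg ln_AB_le in auto)
    with ns show False by simp
  qed
qed

end
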